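(* Let $q$ be a prime power and $\mathcal{L}$ a non-empty set of lines of $\mathrm{PG}(n,q)$ satisfying (Pt), (Pl), (Sd) and (To) (see context). Let $M$ be a $4$-dimensional subspace of $\mathrm{PG}(n,q)$ and let $P$ be a $(q+1)$-$M$-point. Then the plane $\pi_P$ contains at most $q+2$ $(q+1)$-$M$-points.
   Context: (Pt): every point of $\mathrm{PG}(n,q)$ lies on $0$ or $q+1$ lines of $\mathcal{L}$. (Pl): every plane contains $0$, $1$ or $q+1$ lines of $\mathcal{L}$. (Sd): every solid ($3$-dimensional subspace) contains $0$, $1$, $q+1$ or $2q+1$ lines of $\mathcal{L}$. (To): $|\mathcal{L}|\le q^5+q^4+q^3+q^2+q+1$. A point $X$ is a $(q+1)$-$M$-point if exactly $q+1$ lines of $\mathcal{L}$ pass through $X$ and are contained in $M$. For a point $P$ lying on lines of $\mathcal{L}$, $\pi_P$ denotes the subspace spanned by the $q+1$ lines of $\mathcal{L}$ through $P$ (under these hypotheses this is a plane). *)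

theory Defs
  imports "HOL-Analysis.Analysis"
begin

text \<open>PG(n,q) is modelled as the lattice of subspaces of the vector space
  'a^'m over a finite field 'a with q = CARD('a) and n + 1 = CARD('m).
  A projective subspace of projective dimension k is a vector subspace of
  (vector) dimension k+1.\<close>

definition psub :: "nat \<Rightarrow> ('a::field ^ 'm) set \<Rightarrow> bool" where
  "psub k U \<longleftrightarrow> vec.subspace U \<and> vec.dim U = k + 1"

definition pt_cond :: "nat \<Rightarrow> ('a::field ^ 'm) set set \<Rightarrow> bool" where
  "pt_cond q L \<longleftrightarrow> (\<forall>P. psub 0 P \<longrightarrow> card {l\<in>L. P \<subseteq> l} \<in> {0, q + 1})"

definition pl_cond :: "nat \<Rightarrow> ('a::field ^ 'm) set set \<Rightarrow> bool" where
  "pl_cond q L \<longleftrightarrow> (\<forall>E. psub 2 E \<longrightarrow> card {l\<in>L. l \<subseteq> E} \<in> {0, 1, q + 1})"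

definition sd_cond :: "nat \<Rightarrow> ('a::field ^ 'm) set set \<Rightarrow> bool" where
  "sd_cond q L \<longleftrightarrow> (\<forall>S. psub 3 S \<longrightarrow> card {l\<in>L. l \<subseteq> S} \<in> {0, 1, q + 1, 2 * q + 1})"

definition to_cond :: "nat \<Rightarrow> ('a::field ^ 'm) set set \<Rightarrow> bool" where
  "to_cond q L \<longleftrightarrow> card L \<le> q^5 + q^4 + q^3 + q^2 + q + 1"

definition qM_point :: "nat \<Rightarrow> ('a::field ^ 'm) set set \<Rightarrow> ('a ^ 'm) set \<Rightarrow> ('a ^ 'm) set \<Rightarrow> bool" where
  "qM_point q L M X \<longleftrightarrow> psub 0 X \<and> card {l\<in>L. X \<subseteq> l \<and> l \<subseteq> M} = q + 1"

definition pi_of :: "('a::field ^ 'm) set set \<Rightarrow> ('a ^ 'm) set \<Rightarrow> ('a ^ 'm) set" where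
  "pi_of L P = vec.span (\<Union>{l\<in>L. P \<subseteq> l})"

end

theory Submission
  imports Defs
begin

lemma card_subspace:
  fixes U :: "('a::{field,finite} ^ 'm) set"
  assumes "vec.subspace U"
  shows "card U = CARD('a) ^ vec.dim U"
proof -
  obtain B where B: "B \<subseteq> U" "vec.independent B" "U \<subseteq> vec.span B" "card B = vec.dim U"
    using vec.basis_exists by blast
  have fB: "finite B" by simp
  have UB: "vec.span B = U"
    using B assms by (metis vec.span_minimal subset_antisym)
  define f where "f = (\<lambda>c::'a^'m \<Rightarrow> 'a. \<Sum>v\<in>B. c v *s v)"
  have inj: "inj_on f (B \<rightarrow>\<^sub>E UNIV)"
  proof (rule inj_onI)
    fix c d assume c: "c \<in> B \<rightarrow>\<^sub>E UNIV" and d: "d \<in> B \<rightarrow>\<^sub>E UNIV" and e: "f c = f d"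
    have "(\<Sum>v\<in>B. (c v - d v) *s v) = 0"
      using e by (simp add: f_def scaleR_diff_left vector_sub_rdistrib sum_subtractf)
    then have "\<forall>v\<in>B. c v - d v = 0"
      using B(2) unfolding vec.independent_explicit
      by (elim conjE allE[where x="\<lambda>v. c v - d v"]) simp
    then show "c = d" using c d by (auto simp: PiE_def extensional_def fun_eq_iff)
  qed
  have im: "f ` (B \<rightarrow>\<^sub>E UNIV) = U"
  proof
    show "f ` (B \<rightarrow>\<^sub>E UNIV) \<subseteq> U"
      using UB vec.span_finite[OF fB] by (auto simp: f_def)
    show "U \<subseteq> f ` (B \<rightarrow>\<^sub>E UNIV)"
    proof
      fix x assume "x \<in> U"
      then obtain u where "x = (\<Sum>v\<in>B. u v *s v)" using UB vec.span_finite[OF fB] by auto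
      then have "x = f (restrict u B)" by (simp add: f_def)
      then show "x \<in> f ` (B \<rightarrow>\<^sub>E UNIV)" by auto
    qed
  qed
  have "card U = card (B \<rightarrow>\<^sub>E (UNIV::'a set))"
    using card_image[OF inj] im by simp
  also have "\<dots> = CARD('a) ^ card B" by (simp add: card_PiE)
  finally show ?thesis using B by simp
qed

lemma dim_sum:
  fixes U W :: "('a::field ^ 'm) set"
  assumes "vec.subspace U" "vec.subspace W"
  shows "vec.dim (vec.span (U \<union> W)) + vec.dim (U \<inter> W) = vec.dim U + vec.dim W"
proof -
  have "vec.span (U \<union> W) = {x + y |x y. x \<in> U \<and> y \<in> W}"
    using assms by (simp add: vec.span_Un vec.span_eq_iff[THEN iffD2])
  then show ?thesis using vec.dim_sums_Int[OF assms] by simp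
qed

lemma card_ge2: "CARD('a::{field,finite}) \<ge> 2"
proof -
  have "card {0::'a,1} \<le> CARD('a)" by (rule card_mono) auto
  then show ?thesis by simp
qed


lemma count_mid:
  fixes A B :: "('a::{field,finite} ^ 'm) set"
  assumes sA: "vec.subspace A" and sB: "vec.subspace B" and AB: "A \<subseteq> B"
    and dB: "vec.dim B = vec.dim A + 2"
  shows "card {C. vec.subspace C \<and> A \<subseteq> C \<and> C \<subseteq> B \<and> vec.dim C = vec.dim A + 1} \<le> CARD('a) + 1"
proof -
  define F where "F = {C. vec.subspace C \<and> A \<subseteq> C \<and> C \<subseteq> B \<and> vec.dim C = vec.dim A + 1}"
  define q where "q = CARD('a)"
  define a where "a = vec.dim A"
  have q2: "q \<ge> 2" using card_ge2 q_def by simp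
  have cA: "card A = q ^ a" using card_subspace[OF sA] q_def a_def by simp
  have cB: "card B = q ^ (a+2)" using card_subspace[OF sB] q_def a_def dB by simp
  have cC: "card (C - A) = q^(a+1) - q^a" if "C \<in> F" for C
  proof -
    have "card C = q^(a+1)" using that card_subspace[of C] q_def a_def F_def by simp
    moreover have "A \<subseteq> C" using that F_def by simp
    ultimately show ?thesis using cA by (simp add: card_Diff_subset)
  qed
  have disj: "(C - A) \<inter> (C' - A) = {}" if "C \<in> F" "C' \<in> F" "C \<noteq> C'" for C C'
  proof (rule ccontr)
    assume "(C - A) \<inter> (C' - A) \<noteq> {}"
    then obtain x where x: "x \<in> C \<inter> C'" "x \<notin> A" by auto
    have sC: "vec.subspace C" "vec.subspace C'" "A \<subseteq> C \<inter> C'"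
      and dC: "vec.dim C = a+1" "vec.dim C' = a+1" using that unfolding F_def a_def by auto
    have sI: "vec.subspace (C \<inter> C')" using sC vec.subspace_inter by blast
    have "vec.dim (C \<inter> C') \<ge> a" using vec.dim_subset[OF sC(3)] unfolding a_def .
    moreover have "vec.dim (C \<inter> C') \<le> a + 1" using vec.dim_subset[of "C \<inter> C'" C] dC(1) by simp
    moreover have "vec.dim (C \<inter> C') \<noteq> a + 1"
    proof
      assume h: "vec.dim (C \<inter> C') = a + 1"
      have "C \<inter> C' = C" using vec.subspace_dim_equal[OF sI sC(1)] h dC by simp
      moreover have "C \<inter> C' = C'" using vec.subspace_dim_equal[OF sI sC(2)] h dC by simp
      ultimately show False using that by auto
    qed
    ultimately have "vec.dim (C \<inter> C') = a" by simp
    then have "A = C \<inter> C'" using vec.subspace_dim_equal[OF sA sI sC(3)] a_def by (metis order_refl)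
    then show False using x by auto
  qed
  have fF: "finite F" by simp
  have "card (\<Union>C\<in>F. C - A) = (\<Sum>C\<in>F. card (C - A))"
    by (rule card_UN_disjoint) (use disj in auto)
  also have "\<dots> = card F * (q^(a+1) - q^a)" using cC by simp
  finally have e1: "card (\<Union>C\<in>F. C - A) = card F * (q^(a+1) - q^a)" .
  have "(\<Union>C\<in>F. C - A) \<subseteq> B - A" using F_def by auto
  then have "card (\<Union>C\<in>F. C - A) \<le> card (B - A)" by (intro card_mono) auto
  also have "\<dots> = q^(a+2) - q^a" using cA cB AB by (simp add: card_Diff_subset)
  finally have le: "card F * (q^(a+1) - q^a) \<le> q^(a+2) - q^a" using e1 by simp
  obtain r where qr: "q = r + 1" using q2 by (metis add.commute add_leD1 le_add_diff_inverse one_add_one)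
  have r1: "q - 1 = r" using qr by simp
  have id1: "q^(a+1) - q^a = q^a * (q - 1)"
  proof -
    have e1: "q^(a+1) = q^a * r + q^a" using qr by (simp add: algebra_simps)
    show ?thesis using e1 r1 by simp
  qed
  have id2: "q^(a+2) - q^a = (q + 1) * (q^a * (q - 1))"
  proof -
    have e2: "q^(a+2) = (q + 1) * (q^a * r) + q^a" using qr by (simp add: power_add algebra_simps power2_eq_square)
    show ?thesis using e2 r1 by simp
  qed
  have pos: "q^a * (q - 1) > 0" using q2 by simp
  have "card F * (q^a * (q - 1)) \<le> (q + 1) * (q^a * (q - 1))" using le id1 id2 by simp
  then have "card F \<le> q + 1" using pos by (metis mult_le_cancel2 not_gr0)
  then show ?thesis using F_def q_def by simp
qed



lemma sub_eq:
  fixes U W :: "('a::field ^ 'm) set"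
  shows "vec.subspace U \<Longrightarrow> vec.subspace W \<Longrightarrow> U \<subseteq> W \<Longrightarrow> vec.dim W \<le> vec.dim U \<Longrightarrow> U = W"
  using vec.subspace_dim_equal by blast

lemma inter_eq:
  fixes U W V :: "('a::field ^ 'm) set"
  assumes sU: "vec.subspace U" and sW: "vec.subspace W" and sV: "vec.subspace V"
    and VUW: "V \<subseteq> U \<inter> W" and ne: "U \<noteq> W" and dUW: "vec.dim U = vec.dim W"
    and dV: "vec.dim V + 1 = vec.dim U"
  shows "U \<inter> W = V" "vec.dim (vec.span (U \<union> W)) = vec.dim U + 1"
proof -
  have sI: "vec.subspace (U \<inter> W)" using sU sW vec.subspace_inter by blast
  have d1: "vec.dim V \<le> vec.dim (U \<inter> W)" using vec.dim_subset[OF VUW] .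
  have d2: "vec.dim (U \<inter> W) \<le> vec.dim U" using vec.dim_subset[of "U \<inter> W" U] by blast
  have d3: "vec.dim (U \<inter> W) \<noteq> vec.dim U"
  proof
    assume h: "vec.dim (U \<inter> W) = vec.dim U"
    have "U \<inter> W = U" using sub_eq[OF sI sU] h by auto
    moreover have "U \<inter> W = W" using sub_eq[OF sI sW] h dUW by auto
    ultimately show False using ne by auto
  qed
  have dI: "vec.dim (U \<inter> W) = vec.dim V" using d1 d2 d3 dV by linarith
  show "U \<inter> W = V" using sub_eq[OF sV sI VUW] dI by (metis order_refl)
  show "vec.dim (vec.span (U \<union> W)) = vec.dim U + 1"
    using dim_sum[OF sU sW] dI dV dUW by linarith
qed

lemma psubD: "psub k U \<Longrightarrow> vec.subspace U \<and> vec.dim U = k + 1"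
  by (simp add: psub_def)

lemma pts_line:
  fixes X Y :: "('a::field ^ 'm) set"
  assumes X: "psub 0 X" and Y: "psub 0 Y" and ne: "X \<noteq> Y"
  shows "psub 1 (vec.span (X \<union> Y))"
proof -
  have sX: "vec.subspace X" "vec.dim X = 1" and sY: "vec.subspace Y" "vec.dim Y = 1"
    using X Y by (auto simp: psub_def)
  have sI: "vec.subspace (X \<inter> Y)" using sX sY vec.subspace_inter by blast
  have "vec.dim (X \<inter> Y) \<noteq> 1"
  proof
    assume h: "vec.dim (X \<inter> Y) = 1"
    have "X \<inter> Y = X" using sub_eq[OF sI sX(1)] h sX by auto
    moreover have "X \<inter> Y = Y" using sub_eq[OF sI sY(1)] h sY by auto
    ultimately show False using ne by auto
  qed
  moreover have "vec.dim (X \<inter> Y) \<le> 1" using vec.dim_subset[of "X \<inter> Y" X] sX by auto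
  ultimately have "vec.dim (X \<inter> Y) = 0" by linarith
  then have "vec.dim (vec.span (X \<union> Y)) = 2" using dim_sum[OF sX(1) sY(1)] sX sY by linarith
  then show ?thesis by (simp add: psub_def vec.subspace_span)
qed

lemma line_eq:
  fixes X Y l :: "('a::field ^ 'm) set"
  assumes l: "psub 1 l" and X: "psub 0 X" and Y: "psub 0 Y" and ne: "X \<noteq> Y"
    and Xl: "X \<subseteq> l" and Yl: "Y \<subseteq> l"
  shows "l = vec.span (X \<union> Y)"
proof -
  have m: "psub 1 (vec.span (X \<union> Y))" using pts_line[OF X Y ne] .
  have sl: "vec.subspace l" "vec.dim l = 2" using l by (auto simp: psub_def)
  have "vec.span (X \<union> Y) \<subseteq> l" using Xl Yl sl vec.span_minimal by blast
  then show ?thesis using sub_eq[of "vec.span (X \<union> Y)" l] m sl by (auto simp: psub_def)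
qed


lemma three_sets:
  assumes f: "finite A" "finite B" "finite C"
    and c: "card A = k" "card B = k" "card C = k"
    and i: "card (A \<inter> B) \<le> 1" "card (A \<inter> C) \<le> 1" "card (B \<inter> C) \<le> 1"
  shows "card (A \<union> B \<union> C) + 3 \<ge> 3 * k"
proof -
  have e1: "card (A \<union> B) + card (A \<inter> B) = k + k" using card_Un_Int[OF f(1,2)] c by simp
  have "card ((A \<union> B) \<inter> C) \<le> card (A \<inter> C) + card (B \<inter> C)"
  proof -
    have "(A \<union> B) \<inter> C = (A \<inter> C) \<union> (B \<inter> C)" by blast
    then show ?thesis using card_Un_le[of "A \<inter> C" "B \<inter> C"] by simp
  qed
  moreover have "card (A \<union> B \<union> C) + card ((A \<union> B) \<inter> C) = card (A \<union> B) + k"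
    using card_Un_Int[of "A \<union> B" C] f c by simp
  ultimately show ?thesis using e1 i by linarith
qed


lemma sd_contra:
  fixes L :: "('a::field ^ 'm) set set"
  assumes fL: "finite L" and q2: "q \<ge> 2" and Sd: "sd_cond q L" and S: "psub 3 S"
    and sub: "A \<subseteq> {l\<in>L. l \<subseteq> S}" "B \<subseteq> {l\<in>L. l \<subseteq> S}" "C \<subseteq> {l\<in>L. l \<subseteq> S}"
    and c: "card A = q+1" "card B = q+1" "card C = q+1"
    and i: "card (A \<inter> B) \<le> 1" "card (A \<inter> C) \<le> 1" "card (B \<inter> C) \<le> 1"
  shows False
proof -
  have fS: "finite {l\<in>L. l \<subseteq> S}" using fL by simp
  have f: "finite A" "finite B" "finite C"
    using finite_subset[OF sub(1) fS] finite_subset[OF sub(2) fS] finite_subset[OF sub(3) fS] by auto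
  have a: "card (A \<union> B \<union> C) + 3 \<ge> 3 * (q+1)" using three_sets[OF f c i] .
  have b: "card (A \<union> B \<union> C) \<le> card {l\<in>L. l \<subseteq> S}"
  proof (rule card_mono[OF fS])
    show "A \<union> B \<union> C \<subseteq> {l\<in>L. l \<subseteq> S}" using sub by (simp only: Un_least)
  qed
  have "card {l\<in>L. l \<subseteq> S} \<in> {0, 1, q + 1, 2 * q + 1}"
    using Sd S unfolding sd_cond_def by blast
  then have "card {l\<in>L. l \<subseteq> S} = 0 \<or> card {l\<in>L. l \<subseteq> S} = 1 \<or> card {l\<in>L. l \<subseteq> S} = q+1 \<or> card {l\<in>L. l \<subseteq> S} = 2*q+1"
    by simp
  then show False using a b q2 by auto
qed



lemma card_le1I: "finite A \<Longrightarrow> (\<And>a b. a \<in> A \<Longrightarrow> b \<in> A \<Longrightarrow> a = b) \<Longrightarrow> card A \<le> 1"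
  by (simp add: card_le_Suc0_iff_eq)

lemma two_lines_plane:
  fixes l1 l2 X :: "('a::field ^ 'm) set"
  assumes l1: "psub 1 l1" and l2: "psub 1 l2" and X: "psub 0 X" and ne: "l1 \<noteq> l2"
    and X1: "X \<subseteq> l1" and X2: "X \<subseteq> l2"
  shows "psub 2 (vec.span (l1 \<union> l2))" "l1 \<inter> l2 = X"
proof -
  have s: "vec.subspace l1" "vec.subspace l2" "vec.subspace X" "vec.dim l1 = 2" "vec.dim l2 = 2" "vec.dim X = 1"
    using l1 l2 X by (auto simp: psub_def)
  have "X \<subseteq> l1 \<inter> l2" using X1 X2 by blast
  note ie = inter_eq[OF s(1,2,3) this ne]
  show "l1 \<inter> l2 = X" using ie s by simp
  show "psub 2 (vec.span (l1 \<union> l2))" using ie s by (simp add: psub_def vec.subspace_span)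
qed

lemma planes_in_solid:
  fixes E F S l l' :: "('a::field ^ 'm) set"
  assumes E: "psub 2 E" and F: "psub 2 F" and S: "psub 3 S" and ne: "E \<noteq> F"
    and ES: "E \<subseteq> S" and FS: "F \<subseteq> S"
    and l: "psub 1 l" "l \<subseteq> E" "l \<subseteq> F" and l': "psub 1 l'" "l' \<subseteq> E" "l' \<subseteq> F"
  shows "l = l'"
proof -
  have s: "vec.subspace E" "vec.subspace F" "vec.subspace S" "vec.dim E = 3" "vec.dim F = 3" "vec.dim S = 4"
    using E F S by (auto simp: psub_def)
  have sI: "vec.subspace (E \<inter> F)" using s vec.subspace_inter by blast
  have "vec.span (E \<union> F) \<subseteq> S" using ES FS s(3) vec.span_minimal by (metis Un_least)
  then have "vec.dim (vec.span (E \<union> F)) \<le> 4" using vec.dim_subset s(6) by metis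
  then have d1: "vec.dim (E \<inter> F) \<ge> 2" using dim_sum[OF s(1,2)] s by linarith
  have d2: "vec.dim (E \<inter> F) \<noteq> 3"
  proof
    assume h: "vec.dim (E \<inter> F) = 3"
    have "E \<inter> F = E" using sub_eq[OF sI s(1)] h s by auto
    moreover have "E \<inter> F = F" using sub_eq[OF sI s(2)] h s by auto
    ultimately show False using ne by auto
  qed
  have d3: "vec.dim (E \<inter> F) \<le> 3" using vec.dim_subset[of "E \<inter> F" E] s by auto
  have dI: "vec.dim (E \<inter> F) = 2" using d1 d2 d3 by linarith
  have "l = E \<inter> F" using sub_eq[OF _ sI] l dI by (auto simp: psub_def)
  moreover have "l' = E \<inter> F" using sub_eq[OF _ sI] l' dI by (auto simp: psub_def)
  ultimately show ?thesis by simp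
qed

lemma aux_123: "(c::nat) \<ge> 2 \<Longrightarrow> c \<in> {0, 1, q + 1} \<Longrightarrow> c = q + 1" by auto

lemma pl_card:
  fixes L :: "('a::{field,finite} ^ 'm) set set"
  assumes Pl: "pl_cond q L" and E: "psub 2 E" and l: "l \<in> L" "l \<subseteq> E" and l': "l' \<in> L" "l' \<subseteq> E"
    and ne: "l \<noteq> l'"
  shows "card {m\<in>L. m \<subseteq> E} = q + 1"
proof -
  have "{l, l'} \<subseteq> {m\<in>L. m \<subseteq> E}" using l l' by auto
  then have "card {l, l'} \<le> card {m\<in>L. m \<subseteq> E}" by (intro card_mono) auto
  then have "card {m\<in>L. m \<subseteq> E} \<ge> 2" using ne by simp
  moreover have "card {m\<in>L. m \<subseteq> E} \<in> {0, 1, q + 1}" using Pl E unfolding pl_cond_def by blast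
  ultimately show ?thesis using aux_123 by blast
qed



lemma two_elems:
  assumes "finite A" "card A \<ge> 2"
  obtains a b where "a \<in> A" "b \<in> A" "a \<noteq> b"
proof -
  have "A \<noteq> {}" using assms by auto
  then obtain a where a: "a \<in> A" by blast
  have "card (A - {a}) \<ge> 1" using assms a by simp
  then have "A - {a} \<noteq> {}" by (metis card.empty not_one_le_zero)
  then obtain b where "b \<in> A - {a}" by blast
  then show ?thesis using a that by blast
qed

lemma no_third:
  fixes L :: "('a::{field,finite} ^ 'm) set set"
  assumes lines: "\<forall>l\<in>L. psub 1 l" and q2: "q \<ge> 2"
    and Pl: "pl_cond q L" and Sd: "sd_cond q L" and X: "psub 0 X"
    and l1: "l1 \<in> L" "X \<subseteq> l1" and l2: "l2 \<in> L" "X \<subseteq> l2" and ne: "l1 \<noteq> l2"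
    and l3: "l3 \<in> L" "X \<subseteq> l3"
  shows "l3 \<subseteq> vec.span (l1 \<union> l2)"
proof (rule ccontr)
  define E where "E = vec.span (l1 \<union> l2)"
  assume nE: "\<not> l3 \<subseteq> vec.span (l1 \<union> l2)"
  then have nE': "\<not> l3 \<subseteq> E" using E_def by simp
  have pl: "psub 1 l1" "psub 1 l2" "psub 1 l3" using lines l1 l2 l3 by auto
  have E: "psub 2 E" using two_lines_plane[OF pl(1,2) X ne l1(2) l2(2)] E_def by simp
  have l1E: "l1 \<subseteq> E" and l2E: "l2 \<subseteq> E" using E_def vec.span_superset by blast+
  have n31: "l3 \<noteq> l1" using nE' l1E by blast
  have n32: "l3 \<noteq> l2" using nE' l2E by blast
  define E13 where "E13 = vec.span (l1 \<union> l3)"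
  define E23 where "E23 = vec.span (l2 \<union> l3)"
  have E13: "psub 2 E13" using two_lines_plane[OF pl(1,3) X n31[symmetric] l1(2) l3(2)] E13_def by simp
  have E23: "psub 2 E23" using two_lines_plane[OF pl(2,3) X n32[symmetric] l2(2) l3(2)] E23_def by simp
  have l13: "l1 \<subseteq> E13" "l3 \<subseteq> E13" using E13_def vec.span_superset by blast+
  have l23: "l2 \<subseteq> E23" "l3 \<subseteq> E23" using E23_def vec.span_superset by blast+
  define S where "S = vec.span (E \<union> l3)"
  have sE: "vec.subspace E" "vec.dim E = 3" using E by (auto simp: psub_def)
  have s3: "vec.subspace l3" "vec.dim l3 = 2" using pl(3) by (auto simp: psub_def)
  have sX: "vec.subspace X" "vec.dim X = 1" using X by (auto simp: psub_def)
  have sI: "vec.subspace (E \<inter> l3)" using sE s3 vec.subspace_inter by blast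
  have XI: "X \<subseteq> E \<inter> l3" using l1(2) l1E l3(2) by blast
  have dI1: "vec.dim (E \<inter> l3) \<ge> 1" using vec.dim_subset[OF XI] sX by simp
  have dI2: "vec.dim (E \<inter> l3) \<le> 2" using vec.dim_subset[of "E \<inter> l3" l3] s3 by auto
  have dI3: "vec.dim (E \<inter> l3) \<noteq> 2"
  proof
    assume h: "vec.dim (E \<inter> l3) = 2"
    have "E \<inter> l3 = l3" using sub_eq[OF sI s3(1)] h s3 by auto
    then show False using nE' by blast
  qed
  have "vec.dim S = 4" unfolding S_def using dim_sum[OF sE(1) s3(1)] dI1 dI2 dI3 sE s3 by linarith
  then have S: "psub 3 S" using S_def by (simp add: psub_def vec.subspace_span)
  have sS: "vec.subspace S" using S_def vec.subspace_span by blast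
  have ES: "E \<subseteq> S" and l3S: "l3 \<subseteq> S" using S_def vec.span_superset by blast+
  have E13S: "E13 \<subseteq> S" unfolding E13_def using l1E ES l3S sS vec.span_minimal by (metis Un_least subset_trans)
  have E23S: "E23 \<subseteq> S" unfolding E23_def using l2E ES l3S sS vec.span_minimal by (metis Un_least subset_trans)
  have ne1: "E \<noteq> E13" using l13(2) nE' by blast
  have ne2: "E \<noteq> E23" using l23(2) nE' by blast
  have ne3: "E13 \<noteq> E23"
  proof
    assume h: "E13 = E23"
    have "l1 \<union> l2 \<subseteq> E13" using l13(1) l23(1) h by blast
    moreover have "vec.subspace E13" using E13 by (simp add: psub_def)
    ultimately have "E \<subseteq> E13" unfolding E_def by (rule vec.span_minimal)
    then have "E = E13" using sub_eq[of E E13] sE E13 by (auto simp: psub_def)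
    then show False using ne1 by simp
  qed
  have fL: "finite L" by simp
  define A where "A = {m\<in>L. m \<subseteq> E}"
  define B where "B = {m\<in>L. m \<subseteq> E13}"
  define C where "C = {m\<in>L. m \<subseteq> E23}"
  have cA: "card A = q+1" unfolding A_def using pl_card[OF Pl E l1(1) l1E l2(1) l2E ne] .
  have cB: "card B = q+1" unfolding B_def using pl_card[OF Pl E13 l1(1) l13(1) l3(1) l13(2) n31[symmetric]] .
  have cC: "card C = q+1" unfolding C_def using pl_card[OF Pl E23 l2(1) l23(1) l3(1) l23(2) n32[symmetric]] .
  have subs: "A \<subseteq> {l\<in>L. l \<subseteq> S}" "B \<subseteq> {l\<in>L. l \<subseteq> S}" "C \<subseteq> {l\<in>L. l \<subseteq> S}"
    unfolding A_def B_def C_def using ES E13S E23S by auto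
  have i1: "card (A \<inter> B) \<le> 1"
  proof (rule card_le1I)
    fix a b assume "a \<in> A \<inter> B" "b \<in> A \<inter> B"
    then have "a \<in> L" "a \<subseteq> E" "a \<subseteq> E13" "b \<in> L" "b \<subseteq> E" "b \<subseteq> E13"
      by (auto simp: A_def B_def C_def)
    then show "a = b" using planes_in_solid[OF E E13 S ne1 ES E13S, of a b] lines by blast
  qed simp
  have i2: "card (A \<inter> C) \<le> 1"
  proof (rule card_le1I)
    fix a b assume "a \<in> A \<inter> C" "b \<in> A \<inter> C"
    then have "a \<in> L" "a \<subseteq> E" "a \<subseteq> E23" "b \<in> L" "b \<subseteq> E" "b \<subseteq> E23"
      by (auto simp: A_def B_def C_def)
    then show "a = b" using planes_in_solid[OF E E23 S ne2 ES E23S, of a b] lines by blast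
  qed simp
  have i3: "card (B \<inter> C) \<le> 1"
  proof (rule card_le1I)
    fix a b assume "a \<in> B \<inter> C" "b \<in> B \<inter> C"
    then have "a \<in> L" "a \<subseteq> E13" "a \<subseteq> E23" "b \<in> L" "b \<subseteq> E13" "b \<subseteq> E23"
      by (auto simp: A_def B_def C_def)
    then show "a = b" using planes_in_solid[OF E13 E23 S ne3 E13S E23S, of a b] lines by blast
  qed simp
  show False using sd_contra[OF fL q2 Sd S subs cA cB cC i1 i2 i3] .
qed



lemma plane_lemma:
  fixes L :: "('a::{field,finite} ^ 'm) set set"
  assumes lines: "\<forall>l\<in>L. psub 1 l" and q2: "q \<ge> 2"
    and Pl: "pl_cond q L" and Sd: "sd_cond q L" and X: "psub 0 X"
    and cX: "card {l\<in>L. X \<subseteq> l} = q + 1"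
  shows "psub 2 (pi_of L X)" "{l\<in>L. l \<subseteq> pi_of L X} = {l\<in>L. X \<subseteq> l}"
proof -
  define LX where "LX = {l\<in>L. X \<subseteq> l}"
  have fLX: "finite LX" by simp
  have "card LX \<ge> 2" using cX q2 LX_def by simp
  then obtain l1 l2 where l12: "l1 \<in> LX" "l2 \<in> LX" "l1 \<noteq> l2" using two_elems[OF fLX] by blast
  have l1: "l1 \<in> L" "X \<subseteq> l1" and l2: "l2 \<in> L" "X \<subseteq> l2" using l12 LX_def by auto
  define E where "E = vec.span (l1 \<union> l2)"
  have pl: "psub 1 l1" "psub 1 l2" using lines l1 l2 by auto
  have E: "psub 2 E" using two_lines_plane[OF pl(1,2) X l12(3) l1(2) l2(2)] E_def by simp
  have sE: "vec.subspace E" using E by (simp add: psub_def)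
  have allE: "l \<subseteq> E" if "l \<in> LX" for l
    using no_third[OF lines q2 Pl Sd X l1 l2 l12(3), of l] that LX_def E_def by simp
  have "\<Union>LX \<subseteq> E" using allE by blast
  then have "pi_of L X \<subseteq> E" unfolding pi_of_def LX_def[symmetric] using sE by (rule vec.span_minimal)
  moreover have "E \<subseteq> pi_of L X" unfolding pi_of_def E_def LX_def[symmetric]
    using l12 by (intro vec.span_mono) blast
  ultimately have piE: "pi_of L X = E" by blast
  then show "psub 2 (pi_of L X)" using E by simp
  have l1E: "l1 \<subseteq> E" and l2E: "l2 \<subseteq> E" using allE l12 by auto
  have cE: "card {l\<in>L. l \<subseteq> E} = q + 1" using pl_card[OF Pl E l1(1) l1E l2(1) l2E l12(3)] .
  have sub: "LX \<subseteq> {l\<in>L. l \<subseteq> E}" using allE LX_def by auto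
  have "LX = {l\<in>L. l \<subseteq> E}" by (rule card_subset_eq) (use sub cE cX LX_def in auto)
  then show "{l\<in>L. l \<subseteq> pi_of L X} = {l\<in>L. X \<subseteq> l}" using piE LX_def by simp
qed

lemma aux_01: "(c::nat) \<ge> q + 1 \<Longrightarrow> c \<in> {0, q + 1} \<Longrightarrow> c = q + 1" by auto

lemma qM_lines:
  fixes L :: "('a::{field,finite} ^ 'm) set set"
  assumes Pt: "pt_cond q L" and X: "qM_point q L M X"
  shows "card {l\<in>L. X \<subseteq> l} = q + 1" "\<forall>l\<in>L. X \<subseteq> l \<longrightarrow> l \<subseteq> M"
proof -
  have pX: "psub 0 X" and c: "card {l\<in>L. X \<subseteq> l \<and> l \<subseteq> M} = q + 1"
    using X by (auto simp: qM_point_def)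
  have sub: "{l\<in>L. X \<subseteq> l \<and> l \<subseteq> M} \<subseteq> {l\<in>L. X \<subseteq> l}" by blast
  have "card {l\<in>L. X \<subseteq> l \<and> l \<subseteq> M} \<le> card {l\<in>L. X \<subseteq> l}" by (rule card_mono[OF _ sub]) simp
  moreover have "card {l\<in>L. X \<subseteq> l} \<in> {0, q + 1}" using Pt pX unfolding pt_cond_def by blast
  ultimately show c2: "card {l\<in>L. X \<subseteq> l} = q + 1" using c aux_01[of q "card {l\<in>L. X \<subseteq> l}"] by simp
  have "{l\<in>L. X \<subseteq> l \<and> l \<subseteq> M} = {l\<in>L. X \<subseteq> l}" by (rule card_subset_eq) (use sub c c2 in auto)
  then show "\<forall>l\<in>L. X \<subseteq> l \<longrightarrow> l \<subseteq> M" by blast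
qed

lemma pi_in_M:
  fixes L :: "('a::{field,finite} ^ 'm) set set"
  assumes M: "psub 4 M" and h: "\<forall>l\<in>L. X \<subseteq> l \<longrightarrow> l \<subseteq> M"
  shows "pi_of L X \<subseteq> M"
  unfolding pi_of_def using M h by (intro vec.span_minimal) (auto simp: psub_def)



theorem lemma8:
  fixes L :: "('a::{field,finite} ^ 'm) set set"
    and M P :: "('a ^ 'm) set"
  defines "q \<equiv> CARD('a)"
  assumes lines: "\<forall>l\<in>L. psub 1 l"
    and nonempty: "L \<noteq> {}"
    and Pt: "pt_cond q L"
    and Pl: "pl_cond q L"
    and Sd: "sd_cond q L"
    and To: "to_cond q L"
    and M: "psub 4 M"
    and P: "qM_point q L M P"
  shows "card {X. qM_point q L M X \<and> X \<subseteq> pi_of L P} \<le> q + 2"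
proof -
  have q2: "q \<ge> 2" unfolding q_def by (rule card_ge2)
  have fL: "finite L" by simp
  have sM: "vec.subspace M" "vec.dim M = 5" using M by (auto simp: psub_def)
  have pP: "psub 0 P" using P by (simp add: qM_point_def)
  have sP: "vec.subspace P" "vec.dim P = 1" using pP by (auto simp: psub_def)
  define LP where "LP = {l\<in>L. P \<subseteq> l}"
  define E where "E = pi_of L P"
  note cP = qM_lines[OF Pt P]
  have cLP: "card LP = q + 1" using cP LP_def by simp
  have E: "psub 2 E" using plane_lemma[OF lines q2 Pl Sd pP cP(1)] E_def by simp
  have linesE: "{l\<in>L. l \<subseteq> E} = LP" using plane_lemma[OF lines q2 Pl Sd pP cP(1)] E_def LP_def by simp
  have sE: "vec.subspace E" "vec.dim E = 3" using E by (auto simp: psub_def)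
  have EM: "E \<subseteq> M" unfolding E_def by (rule pi_in_M[OF M cP(2)])
  have PE: "P \<subseteq> E"
  proof -
    have "LP \<noteq> {}" using cLP by auto
    then obtain l where "l \<in> LP" by blast
    then show ?thesis using linesE LP_def by blast
  qed
  define F where "F = {C. vec.subspace C \<and> P \<subseteq> C \<and> C \<subseteq> E \<and> vec.dim C = vec.dim P + 1}"
  have cF: "card F \<le> q + 1" unfolding F_def q_def
    by (rule count_mid[OF sP(1) sE(1) PE]) (simp add: sP sE)
  have LPF: "LP \<subseteq> F"
  proof
    fix l assume l: "l \<in> LP"
    then have "l \<subseteq> E" using linesE by blast
    moreover have "psub 1 l" using l lines LP_def by auto
    ultimately show "l \<in> F" using l sP unfolding F_def LP_def psub_def by auto
  qed
  have LPeqF: "LP = F" by (rule card_seteq) (use LPF cF cLP in auto)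
  have cover: "vec.span (P \<union> X) \<in> LP" if X: "psub 0 X" "X \<subseteq> E" "X \<noteq> P" for X
  proof -
    have m: "psub 1 (vec.span (P \<union> X))" using pts_line[OF pP X(1)] X(3) by auto
    have "vec.span (P \<union> X) \<subseteq> E" using PE X(2) sE(1) by (intro vec.span_minimal) auto
    moreover have "P \<subseteq> vec.span (P \<union> X)" using vec.span_superset by blast
    ultimately have "vec.span (P \<union> X) \<in> F" using m sP unfolding F_def psub_def by auto
    then show ?thesis using LPeqF by simp
  qed
  define T where "T = {X. qM_point q L M X \<and> X \<subseteq> E} - {P}"
  define SX where "SX = (\<lambda>X. vec.span (E \<union> pi_of L X))"
  define G where "G = {C. vec.subspace C \<and> E \<subseteq> C \<and> C \<subseteq> M \<and> vec.dim C = vec.dim E + 1}"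
  have cG: "card G \<le> q + 1" unfolding G_def q_def
    by (rule count_mid[OF sE(1) sM(1) EM]) (simp add: sM sE)
  have facts: "psub 0 X \<and> card {l\<in>L. X \<subseteq> l} = q + 1 \<and> psub 2 (pi_of L X)
      \<and> {l\<in>L. l \<subseteq> pi_of L X} = {l\<in>L. X \<subseteq> l} \<and> vec.span (P \<union> X) \<in> {l\<in>L. X \<subseteq> l}
      \<and> pi_of L X \<noteq> E \<and> psub 3 (SX X) \<and> SX X \<in> G" if XT: "X \<in> T" for X
  proof -
    have XqM: "qM_point q L M X" and XE: "X \<subseteq> E" and XP: "X \<noteq> P" using XT T_def by auto
    have pX: "psub 0 X" using XqM by (simp add: qM_point_def)
    note cX = qM_lines[OF Pt XqM]
    note plX = plane_lemma[OF lines q2 Pl Sd pX cX(1)]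
    define piX where "piX = pi_of L X"
    define mX where "mX = vec.span (P \<union> X)"
    have piXM: "piX \<subseteq> M" unfolding piX_def by (rule pi_in_M[OF M cX(2)])
    have mLP: "mX \<in> LP" using cover[OF pX XE XP] mX_def by simp
    have XmX: "X \<subseteq> mX" unfolding mX_def using vec.span_superset by blast
    have mLX: "mX \<in> {l\<in>L. X \<subseteq> l}" using mLP XmX LP_def by auto
    have mpiX: "mX \<subseteq> piX" using mLX plX(2) piX_def by blast
    have mE: "mX \<subseteq> E" using mLP linesE by blast
    have ne: "piX \<noteq> E"
    proof
      assume h: "piX = E"
      have LXLP: "{l\<in>L. X \<subseteq> l} = LP" using plX(2) h linesE piX_def by simp
      have "card {l\<in>L. X \<subseteq> l} \<ge> 2" using cX q2 by simp
      then obtain a b where ab: "a \<in> {l\<in>L. X \<subseteq> l}" "b \<in> {l\<in>L. X \<subseteq> l}" "a \<noteq> b"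
        using two_elems[of "{l\<in>L. X \<subseteq> l}"] by auto
      have a1: "a \<in> L" "X \<subseteq> a" "P \<subseteq> a" using ab(1) LXLP unfolding LP_def by blast+
      have b1: "b \<in> L" "X \<subseteq> b" "P \<subseteq> b" using ab(2) LXLP unfolding LP_def by blast+
      have pa: "psub 1 a" "psub 1 b" using lines a1(1) b1(1) by auto
      have "a = vec.span (P \<union> X)" by (rule line_eq[OF pa(1) pP pX XP[symmetric] a1(3) a1(2)])
      moreover have "b = vec.span (P \<union> X)" by (rule line_eq[OF pa(2) pP pX XP[symmetric] b1(3) b1(2)])
      ultimately show False using ab by simp
    qed
    have spiX: "vec.subspace piX" "vec.dim piX = 3" using plX(1) piX_def by (auto simp: psub_def)
    have smX: "vec.subspace mX" "vec.dim mX = 2" using mLP lines LP_def by (auto simp: psub_def)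
    have "mX \<subseteq> E \<inter> piX" using mE mpiX by blast
    note ie = inter_eq[OF sE(1) spiX(1) smX(1) this ne[symmetric]]
    have dS: "vec.dim (SX X) = 4" unfolding SX_def piX_def[symmetric] using ie(2) sE(2) spiX(2) smX(2) by simp
    have SXM: "SX X \<subseteq> M" unfolding SX_def piX_def[symmetric]
    proof (rule vec.span_minimal)
      show "E \<union> piX \<subseteq> M" using EM piXM by blast
    qed (rule sM(1))
    have ESX: "E \<subseteq> SX X" unfolding SX_def using vec.span_superset by blast
    have sSX: "vec.subspace (SX X)" unfolding SX_def by (rule vec.subspace_span)
    have SXG: "SX X \<in> G" unfolding G_def using sSX ESX SXM dS sE(2) by simp
    have SXp: "psub 3 (SX X)" using dS sSX by (simp add: psub_def)
    have ne': "pi_of L X \<noteq> E" using ne piX_def by simp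
    have mLX': "vec.span (P \<union> X) \<in> {l\<in>L. X \<subseteq> l}" using mLX mX_def by simp
    show ?thesis by (intro conjI) (fact pX cX(1) plX(1) plX(2) mLX' ne' SXp SXG)+
  qed
  have inj: "inj_on SX T"
  proof (rule inj_onI, rule ccontr)
    fix X Y assume XT: "X \<in> T" and YT: "Y \<in> T" and eq: "SX X = SX Y" and XY: "X \<noteq> Y"
    note fX = facts[OF XT] and fY = facts[OF YT]
    note pX = fX[THEN conjunct1] and cX = fX[THEN conjunct2, THEN conjunct1]
      and lX = fX[THEN conjunct2, THEN conjunct2, THEN conjunct2, THEN conjunct1]
      and SXp = fX[THEN conjunct2, THEN conjunct2, THEN conjunct2, THEN conjunct2, THEN conjunct2, THEN conjunct2, THEN conjunct1]
    note pY = fY[THEN conjunct1] and cY = fY[THEN conjunct2, THEN conjunct1]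
      and lY = fY[THEN conjunct2, THEN conjunct2, THEN conjunct2, THEN conjunct1]
    have XP: "X \<noteq> P" and YP: "Y \<noteq> P" using XT YT T_def by auto
    define S where "S = SX X"
    have S: "psub 3 S" using SXp S_def by simp
    have piXS: "pi_of L X \<subseteq> S" unfolding S_def SX_def by (rule subset_trans[OF Un_upper2 vec.span_superset])
    have piYS: "pi_of L Y \<subseteq> S" unfolding S_def eq unfolding SX_def by (rule subset_trans[OF Un_upper2 vec.span_superset])
    have ES: "E \<subseteq> S" unfolding S_def SX_def by (rule subset_trans[OF Un_upper1 vec.span_superset])
    have sub1: "LP \<subseteq> {l\<in>L. l \<subseteq> S}" unfolding linesE[symmetric] using ES by auto
    have sub2: "{l\<in>L. X \<subseteq> l} \<subseteq> {l\<in>L. l \<subseteq> S}" unfolding lX[symmetric] using piXS by auto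
    have sub3: "{l\<in>L. Y \<subseteq> l} \<subseteq> {l\<in>L. l \<subseteq> S}" unfolding lY[symmetric] using piYS by auto
    have leq: "a = vec.span (U \<union> V)" if "a \<in> L" "U \<subseteq> a" "V \<subseteq> a" "psub 0 U" "psub 0 V" "U \<noteq> V" for a U V
    proof -
      have pa: "psub 1 a" using lines that(1) by blast
      show ?thesis by (rule line_eq[OF pa that(4) that(5) that(6) that(2) that(3)])
    qed
    have i1: "card (LP \<inter> {l\<in>L. X \<subseteq> l}) \<le> 1"
    proof (rule card_le1I)
      fix a b assume a: "a \<in> LP \<inter> {l\<in>L. X \<subseteq> l}" and b: "b \<in> LP \<inter> {l\<in>L. X \<subseteq> l}"
      have "a = vec.span (P \<union> X)" by (rule leq) (use a pP pX XP LP_def in auto)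
      moreover have "b = vec.span (P \<union> X)" by (rule leq) (use b pP pX XP LP_def in auto)
      ultimately show "a = b" by simp
    qed simp
    have i2: "card (LP \<inter> {l\<in>L. Y \<subseteq> l}) \<le> 1"
    proof (rule card_le1I)
      fix a b assume a: "a \<in> LP \<inter> {l\<in>L. Y \<subseteq> l}" and b: "b \<in> LP \<inter> {l\<in>L. Y \<subseteq> l}"
      have "a = vec.span (P \<union> Y)" by (rule leq) (use a pP pY YP LP_def in auto)
      moreover have "b = vec.span (P \<union> Y)" by (rule leq) (use b pP pY YP LP_def in auto)
      ultimately show "a = b" by simp
    qed simp
    have i3: "card ({l\<in>L. X \<subseteq> l} \<inter> {l\<in>L. Y \<subseteq> l}) \<le> 1"
    proof (rule card_le1I)
      fix a b assume a: "a \<in> {l\<in>L. X \<subseteq> l} \<inter> {l\<in>L. Y \<subseteq> l}" and b: "b \<in> {l\<in>L. X \<subseteq> l} \<inter> {l\<in>L. Y \<subseteq> l}"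
      have "a = vec.span (X \<union> Y)" by (rule leq) (use a pX pY XY in auto)
      moreover have "b = vec.span (X \<union> Y)" by (rule leq) (use b pX pY XY in auto)
      ultimately show "a = b" by simp
    qed simp
    show False by (rule sd_contra[OF fL q2 Sd S sub1 sub2 sub3 cLP cX cY i1 i2 i3])
  qed
  have "SX ` T \<subseteq> G"
  proof
    fix C assume "C \<in> SX ` T"
    then obtain X where "X \<in> T" "C = SX X" by blast
    then show "C \<in> G" using facts[of X] by blast
  qed
  then have "card T \<le> card G" using inj by (intro card_inj_on_le) auto
  then have cT: "card T \<le> q + 1" using cG by simp
  have "{X. qM_point q L M X \<and> X \<subseteq> pi_of L P} \<subseteq> insert P T" using T_def E_def by auto
  then have "card {X. qM_point q L M X \<and> X \<subseteq> pi_of L P} \<le> card (insert P T)" by (intro card_mono) auto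
  also have "\<dots> \<le> card T + 1" by (simp add: card_insert_if)
  finally show ?thesis using cT by simp
qed


end
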